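(* Let $n\ge 3$, let $F\subseteq E(BH_n)$ with $|F|=4n-5$ and $\delta(BH_n-F)\ge 2$. Then at least one of the following holds: (1) there is an integer $m\in\{0,1,\dots,n-1\}$ such that $|F\cap\partial D_m|\ge 3$ and $\delta(BH_n-F-\partial D_m)\ge 2$; (2) there are two integers $m,m'\in\{0,1,\dots,n-1\}$ such that $|F\cap\partial D_m|\ge 2$ and $|F\cap\partial D_{m'}|\ge 2$, and moreover, for each $k\in\{m,m'\}$, the graph $BH_n-F-\partial D_k$ has no isolated vertex and at most one vertex of degree $1$.
   Context: The $n$-dimensional balanced hypercube $BH_n$ has vertex set $\{0,1,2,3\}^n$, vertices written $(a_0,a_1,\dots,a_{n-1})$. A vertex $(a_0,a_1,\dots,a_{n-1})$ is adjacent exactly to the $2n$ vertices $((a_0\pm 1)\bmod 4,a_1,\dots,a_{n-1})$ and $((a_0\pm1)\bmod 4,a_1,\dots,a_{i-1},(a_i+(-1)^{a_0})\bmod 4,a_{i+1},\dots,a_{n-1})$ for $1\le i\le n-1$. An edge $(u,v)$ is a $0$-dimension edge if $u,v$ differ only in the coordinate $a_0$; it is an $i$-dimension edge ($1\le i\le n-1$) if $u,v$ differ in the coordinates $a_0$ and $a_i$. $\partial D_d$ denotes the set of all $d$-dimension edges. For an edge set $S$, $BH_n-F-S$ is the graph on $V(BH_n)$ with edge set $E(BH_n)\setminus(F\cup S)$. *)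

theory Defs
  imports Main
begin

definition bh_verts :: "nat \<Rightarrow> nat list set" where
  "bh_verts n = {a. length a = n \<and> (\<forall>i<n. a ! i < 4)}"

text \<open>(a - 1) mod 4 is written (a + 3) mod 4; (-1)^a0 step likewise.\<close>
definition bh_adj :: "nat \<Rightarrow> nat list \<Rightarrow> nat list \<Rightarrow> bool" where
  "bh_adj n u v \<longleftrightarrow> u \<in> bh_verts n \<and>
     (\<exists>s\<in>{1,3::nat}.
        v = u[0 := (u ! 0 + s) mod 4] \<or>
        (\<exists>i. 1 \<le> i \<and> i \<le> n - 1 \<and>
           v = u[0 := (u ! 0 + s) mod 4,
                 i := (u ! i + (if even (u ! 0) then 1 else 3)) mod 4]))"

definition bh_edges :: "nat \<Rightarrow> nat list set set" where
  "bh_edges n = {{u, v} | u v. bh_adj n u v}"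

definition dim_edges :: "nat \<Rightarrow> nat \<Rightarrow> nat list set set" where
  "dim_edges n d = {e \<in> bh_edges n. \<exists>u v. e = {u, v} \<and>
      (\<forall>j<n. j \<noteq> 0 \<and> j \<noteq> d \<longrightarrow> u ! j = v ! j) \<and>
      (d \<noteq> 0 \<longrightarrow> u ! d \<noteq> v ! d)}"

definition deg_in :: "nat list set set \<Rightarrow> nat list \<Rightarrow> nat" where
  "deg_in E x = card {e \<in> E. x \<in> e}"

end

theory Submission
  imports Defs
begin

definition nb :: "nat list \<Rightarrow> nat \<Rightarrow> nat \<Rightarrow> nat list" where
  "nb x i s = (if i = 0 then x[0 := (x!0 + s) mod 4]
     else x[0 := (x!0 + s) mod 4, i := (x!i + (if even (x!0) then 1 else 3)) mod 4])"

lemma nb_len[simp]: "length (nb x i s) = length x"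
  by (simp add: nb_def)

lemma nb_nth: "j < length x \<Longrightarrow> nb x i s ! j =
   (if j = 0 then (x!0 + s) mod 4 else if j = i then (x!i + (if even (x!0) then 1 else 3)) mod 4 else x!j)"
  by (auto simp: nb_def nth_list_update)

lemma adj_iff: "n \<ge> 1 \<Longrightarrow> bh_adj n u v \<longleftrightarrow> u \<in> bh_verts n \<and> (\<exists>i<n. \<exists>s\<in>{1,3}. v = nb u i s)"
  unfolding bh_adj_def
proof (intro iffI conjI; (elim conjE)?)
  assume n: "n \<ge> 1" and u: "u \<in> bh_verts n"
  { assume "\<exists>s\<in>{1, 3}. v = u[0 := (u ! 0 + s) mod 4] \<or>
           (\<exists>i. 1 \<le> i \<and> i \<le> n - 1 \<and> v = u[0 := (u ! 0 + s) mod 4, i := (u ! i + (if even (u ! 0) then 1 else 3)) mod 4])"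
    then obtain s where s: "s \<in> {1,3}" and h: "v = u[0 := (u ! 0 + s) mod 4] \<or>
           (\<exists>i. 1 \<le> i \<and> i \<le> n - 1 \<and> v = u[0 := (u ! 0 + s) mod 4, i := (u ! i + (if even (u ! 0) then 1 else 3)) mod 4])" by blast
    from h show "\<exists>i<n. \<exists>s\<in>{1,3}. v = nb u i s"
    proof
      assume "v = u[0 := (u ! 0 + s) mod 4]"
      then have "v = nb u 0 s" by (simp add: nb_def)
      then show ?thesis using s n by force
    next
      assume "\<exists>i. 1 \<le> i \<and> i \<le> n - 1 \<and> v = u[0 := (u ! 0 + s) mod 4, i := (u ! i + (if even (u ! 0) then 1 else 3)) mod 4]"
      then obtain i where "1 \<le> i" "i \<le> n - 1" "v = u[0 := (u ! 0 + s) mod 4, i := (u ! i + (if even (u ! 0) then 1 else 3)) mod 4]" by blast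
      then have "v = nb u i s" "i < n" using n by (auto simp: nb_def)
      then show ?thesis using s by blast
    qed
  }
  { assume "\<exists>i<n. \<exists>s\<in>{1,3}. v = nb u i s"
    then obtain i s where "i < n" "s \<in> {1,3}" "v = nb u i s" by blast
    then show "\<exists>s\<in>{1, 3}. v = u[0 := (u ! 0 + s) mod 4] \<or>
           (\<exists>i. 1 \<le> i \<and> i \<le> n - 1 \<and> v = u[0 := (u ! 0 + s) mod 4, i := (u ! i + (if even (u ! 0) then 1 else 3)) mod 4])"
    proof (cases "i = 0")
      case True then show ?thesis using \<open>s \<in> {1,3}\<close> \<open>v = nb u i s\<close> by (auto simp: nb_def)
    next
      case False
      then have "1 \<le> i \<and> i \<le> n - 1 \<and> v = u[0 := (u ! 0 + s) mod 4, i := (u ! i + (if even (u ! 0) then 1 else 3)) mod 4]"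
        using \<open>i < n\<close> \<open>v = nb u i s\<close> by (auto simp: nb_def)
      then show ?thesis using \<open>s \<in> {1,3}\<close> by blast
    qed
  }
qed

lemma verts_iff: "x \<in> bh_verts n \<longleftrightarrow> length x = n \<and> (\<forall>i<n. x!i < 4)"
  by (simp add: bh_verts_def)

lemma lt4_cases: "(a::nat) < 4 \<Longrightarrow> a = 0 \<or> a = 1 \<or> a = 2 \<or> a = 3" by arith

lemma nb_in: "x \<in> bh_verts n \<Longrightarrow> nb x i s \<in> bh_verts n"
  by (auto simp: verts_iff nb_nth)

lemma nb_inv: assumes x: "x \<in> bh_verts n" and i: "i < n" and s: "s \<in> {1,3}"
  shows "nb (nb x i s) i (4 - s) = x"
proof (rule nth_equalityI)
  show "length (nb (nb x i s) i (4 - s)) = length x" by simp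
  fix j assume j: "j < length (nb (nb x i s) i (4 - s))"
  then have jn: "j < n" "0 < n" using x by (auto simp: verts_iff)
  have x0: "x!0 < 4" and xi: "x!i < 4" and xj: "x!j < 4" using x jn i by (auto simp: verts_iff)
  have l: "j < length x" "0 < length x" "i < length x" using x jn i by (auto simp: verts_iff)
  show "nb (nb x i s) i (4 - s) ! j = x ! j"
    using lt4_cases[OF x0] lt4_cases[OF xi] s l
    by (auto simp: nb_nth)
qed

lemma nb_ne: assumes "x \<in> bh_verts n" "n \<ge> 1" "s \<in> {1,3}" shows "nb x i s \<noteq> x"
proof
  assume "nb x i s = x"
  then have "nb x i s ! 0 = x ! 0" by simp
  moreover have "0 < length x" "x!0 < 4" using assms by (auto simp: verts_iff)
  ultimately show False using assms(3) lt4_cases[of "x!0"] by (auto simp: nb_nth)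
qed

lemma nb_13: assumes "x \<in> bh_verts n" "n \<ge> 1" shows "nb x i 1 \<noteq> nb x i 3"
proof
  assume "nb x i 1 = nb x i 3"
  then have "nb x i 1 ! 0 = nb x i 3 ! 0" by simp
  moreover have "0 < length x" "x!0 < 4" using assms by (auto simp: verts_iff)
  ultimately show False using lt4_cases[of "x!0"] by (auto simp: nb_nth)
qed

lemma nb_par: assumes "x \<in> bh_verts n" "n \<ge> 1" "s \<in> {1,3}" shows "even (nb x i s ! 0) \<longleftrightarrow> odd (x!0)"
proof -
  have "0 < length x" "x!0 < 4" using assms by (auto simp: verts_iff)
  then show ?thesis using assms(3) lt4_cases[of "x!0"] by (auto simp: nb_nth)
qed

lemma edge_of: assumes "n \<ge> 1" "u \<in> bh_verts n" "i < n" "s \<in> {1,3}" shows "{u, nb u i s} \<in> bh_edges n"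
proof -
  have "bh_adj n u (nb u i s)" unfolding adj_iff[OF assms(1)] using assms by blast
  then show ?thesis unfolding bh_edges_def by blast
qed

lemma edge_form: assumes "n \<ge> 1" "e \<in> bh_edges n"
  shows "\<exists>u\<in>bh_verts n. \<exists>i<n. \<exists>s\<in>{1,3}. e = {u, nb u i s}"
proof -
  obtain u v where uv: "e = {u,v}" "bh_adj n u v" using assms(2) unfolding bh_edges_def by blast
  then have "u \<in> bh_verts n \<and> (\<exists>i<n. \<exists>s\<in>{1,3}. v = nb u i s)" using adj_iff[OF assms(1)] by simp
  then obtain i s where "u \<in> bh_verts n" "i < n" "s \<in> {1,3}" "v = nb u i s" by blast
  then show ?thesis using uv(1) by blast
qed

lemma Ex_eq: assumes n: "n \<ge> 1" and x: "x \<in> bh_verts n"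
  shows "{e\<in>bh_edges n. x\<in>e} = (\<lambda>(i,s). {x, nb x i s}) ` ({..<n} \<times> {1,3})"
proof
  show "{e\<in>bh_edges n. x\<in>e} \<subseteq> (\<lambda>(i,s). {x, nb x i s}) ` ({..<n} \<times> {1,3})"
  proof
    fix e assume "e \<in> {e\<in>bh_edges n. x\<in>e}"
    then have e: "e \<in> bh_edges n" "x \<in> e" by auto
    obtain u i s where u: "u \<in> bh_verts n" "i < n" "s \<in> {1,3}" "e = {u, nb u i s}"
      using edge_form[OF n e(1)] by blast
    show "e \<in> (\<lambda>(i,s). {x, nb x i s}) ` ({..<n} \<times> {1,3})"
    proof (cases "x = u")
      case True then show ?thesis using u by force
    next
      case False
      then have "x = nb u i s" using u e by auto
      then have "u = nb x i (4 - s)" using nb_inv[OF u(1-3)] by simp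
      moreover have "4 - s \<in> {1,3}" using u(3) by auto
      ultimately have "e = (\<lambda>(i,s). {x, nb x i s}) (i, 4 - s)" "(i, 4 - s) \<in> {..<n} \<times> {1,3}"
        using u \<open>x = nb u i s\<close> by auto
      then show ?thesis by blast
    qed
  qed
  show "(\<lambda>(i,s). {x, nb x i s}) ` ({..<n} \<times> {1,3}) \<subseteq> {e\<in>bh_edges n. x\<in>e}"
    using edge_of[OF n x] by auto
qed

lemma key4: "(a::nat) < 4 \<Longrightarrow> a \<noteq> (a + (if b then 1 else 3)) mod 4"
  using lt4_cases[of a] by (cases b) auto

lemma dim_iff: assumes n: "n \<ge> 1" and x: "x \<in> bh_verts n" and i: "i < n" and s: "s \<in> {1,3}" and k: "k < n"
  shows "{x, nb x i s} \<in> dim_edges n k \<longleftrightarrow> k = i"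
proof
  have l: "length x = n" and x4: "\<forall>j<n. x!j < 4" using x by (auto simp: verts_iff)
  let ?y = "nb x i s"
  assume "{x, ?y} \<in> dim_edges n k"
  then obtain u v where uv: "{x, ?y} = {u, v}" and
    agree: "\<forall>j<n. j \<noteq> 0 \<and> j \<noteq> k \<longrightarrow> u ! j = v ! j" and
    diff: "k \<noteq> 0 \<longrightarrow> u ! k \<noteq> v ! k" unfolding dim_edges_def mem_Collect_eq
    by (elim conjE exE) (rule that; assumption)
  have "(u = x \<and> v = ?y) \<or> (u = ?y \<and> v = x)" using uv by (auto simp: doubleton_eq_iff)
  then have agree': "\<forall>j<n. j \<noteq> 0 \<and> j \<noteq> k \<longrightarrow> x ! j = ?y ! j" and diff': "k \<noteq> 0 \<longrightarrow> x ! k \<noteq> ?y ! k"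
    using agree diff by auto
  show "k = i"
  proof (rule ccontr)
    assume ki: "k \<noteq> i"
    show False
    proof (cases "i = 0")
      case True
      then have "k \<noteq> 0" using ki by simp
      then have "x ! k \<noteq> ?y ! k" using diff' by simp
      moreover have "?y ! k = x ! k" using True \<open>k \<noteq> 0\<close> k l by (simp add: nb_nth)
      ultimately show False by simp
    next
      case False
      then have A: "x ! i = ?y ! i" using agree' ki i by simp
      have lt: "x!i < 4" using x4 i by simp
      have B: "?y ! i = (x!i + (if even (x!0) then 1 else 3)) mod 4" using False i l by (simp add: nb_nth)
      have eq: "x!i = (x!i + (if even (x!0) then 1 else 3)) mod 4" using A B by (rule trans)
      show False using key4[OF lt, of "even (x!0)"] eq by (rule notE)
    qed
  qed
next
  have l: "length x = n" and x4: "\<forall>j<n. x!j < 4" using x by (auto simp: verts_iff)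
  assume "k = i"
  have "\<forall>j<n. j \<noteq> 0 \<and> j \<noteq> k \<longrightarrow> x ! j = nb x i s ! j" using l \<open>k = i\<close> by (simp add: nb_nth)
  moreover have "k \<noteq> 0 \<longrightarrow> x ! k \<noteq> nb x i s ! k"
  proof
    assume "k \<noteq> 0"
    have "x!i < 4" using x4 i by simp
    then show "x ! k \<noteq> nb x i s ! k" using \<open>k = i\<close> \<open>k \<noteq> 0\<close> i l lt4_cases[of "x!i"] by (auto simp: nb_nth)
  qed
  ultimately have "\<exists>u v. {x, nb x i s} = {u, v} \<and> (\<forall>j<n. j \<noteq> 0 \<and> j \<noteq> k \<longrightarrow> u ! j = v ! j) \<and> (k \<noteq> 0 \<longrightarrow> u ! k \<noteq> v ! k)"
    by (intro exI[of _ x] exI[of _ "nb x i s"]) simp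
  then show "{x, nb x i s} \<in> dim_edges n k"
    unfolding dim_edges_def using edge_of[OF n x i s] by simp
qed

lemma dim_sub: "dim_edges n k \<subseteq> bh_edges n"
  unfolding dim_edges_def by auto

lemma dim_unique: assumes "n \<ge> 1" "e \<in> dim_edges n j" "e \<in> dim_edges n k" "j < n" "k < n"
  shows "j = k"
proof -
  obtain u i s where u: "u \<in> bh_verts n" "i < n" "s \<in> {1,3}" "e = {u, nb u i s}"
    using edge_form[OF assms(1)] assms(2) dim_sub by blast
  have "j = i" using dim_iff[OF assms(1) u(1-3) assms(4)] assms(2) u(4) by simp
  moreover have "k = i" using dim_iff[OF assms(1) u(1-3) assms(5)] assms(3) u(4) by simp
  ultimately show ?thesis by simp
qed

lemma dim_exists: assumes "n \<ge> 1" "e \<in> bh_edges n" shows "\<exists>k<n. e \<in> dim_edges n k"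
proof -
  obtain u i s where u: "u \<in> bh_verts n" "i < n" "s \<in> {1,3}" "e = {u, nb u i s}"
    using edge_form[OF assms(1,2)] by blast
  show ?thesis using dim_iff[OF assms(1) u(1-3) u(2)] u by blast
qed

lemma edge_two: assumes "n \<ge> 1" "e \<in> bh_edges n"
  shows "\<exists>a b. e = {a,b} \<and> a \<noteq> b \<and> a \<in> bh_verts n \<and> b \<in> bh_verts n \<and> (even (a!0) \<longleftrightarrow> odd (b!0))"
proof -
  obtain u i s where u: "u \<in> bh_verts n" "i < n" "s \<in> {1,3}" "e = {u, nb u i s}"
    using edge_form[OF assms(1,2)] by blast
  show ?thesis
    apply (rule exI[of _ u], rule exI[of _ "nb u i s"])
    using u nb_ne[OF u(1) assms(1) u(3), of i] nb_in[OF u(1)] nb_par[OF u(1) assms(1) u(3)] by auto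
qed

lemma ExD_eq: assumes n: "n \<ge> 1" and x: "x \<in> bh_verts n" and k: "k < n"
  shows "{e\<in>bh_edges n. x\<in>e} \<inter> dim_edges n k = {{x, nb x k 1}, {x, nb x k 3}}"
proof
  show "{e\<in>bh_edges n. x\<in>e} \<inter> dim_edges n k \<subseteq> {{x, nb x k 1}, {x, nb x k 3}}"
  proof
    fix e assume e: "e \<in> {e\<in>bh_edges n. x\<in>e} \<inter> dim_edges n k"
    then obtain i s where ism: "i < n" "s \<in> {1,3}" "e = {x, nb x i s}"
      using Ex_eq[OF n x] by auto
    then have "k = i" using dim_iff[OF n x ism(1,2) k] e by simp
    then show "e \<in> {{x, nb x k 1}, {x, nb x k 3}}" using ism by auto
  qed
  show "{{x, nb x k 1}, {x, nb x k 3}} \<subseteq> {e\<in>bh_edges n. x\<in>e} \<inter> dim_edges n k"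
    using dim_iff[OF n x k _ k] edge_of[OF n x k] by auto
qed

lemma card_ExD: assumes n: "n \<ge> 1" and x: "x \<in> bh_verts n" and k: "k < n"
  shows "card ({e\<in>bh_edges n. x\<in>e} \<inter> dim_edges n k) = 2"
proof -
  have "{x, nb x k 1} \<noteq> {x, nb x k 3}"
    using nb_13[OF x n, of k] nb_ne[OF x n, of 1 k] nb_ne[OF x n, of 3 k] by (auto simp: doubleton_eq_iff)
  then show ?thesis using ExD_eq[OF assms] by simp
qed

lemma finite_verts: "finite (bh_verts n)"
proof -
  have "bh_verts n \<subseteq> {xs. set xs \<subseteq> {0..<4} \<and> length xs = n}"
    by (auto simp: verts_iff in_set_conv_nth)
  then show ?thesis using finite_lists_length_eq[of "{0..<4::nat}" n] finite_subset by blast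
qed

lemma finite_edges: assumes "n \<ge> 1" shows "finite (bh_edges n)"
proof -
  have "bh_edges n \<subseteq> Pow (bh_verts n)"
  proof
    fix e assume "e \<in> bh_edges n"
    then obtain a b where "e = {a,b}" "a \<in> bh_verts n" "b \<in> bh_verts n" using edge_two[OF assms] by blast
    then show "e \<in> Pow (bh_verts n)" by simp
  qed
  then show ?thesis using finite_verts finite_subset by blast
qed

lemma sum_bound_out:
  fixes g :: "nat \<Rightarrow> nat"
  assumes "finite A" "B \<subseteq> A" "\<And>i. i \<in> A - B \<Longrightarrow> g i \<le> r"
  shows "sum g A \<le> sum g B + r * (card A - card B)"
proof -
  have "sum g A = sum g B + sum g (A - B)" using sum.subset_diff[OF assms(2,1)] by (simp add: add.commute)
  moreover have "sum g (A - B) \<le> card (A - B) * r" using sum_bounded_above[of "A - B" g r] assms(3) by auto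
  moreover have "card (A - B) = card A - card B" using card_Diff_subset[of B A] assms(1,2) finite_subset by auto
  ultimately show ?thesis by (simp add: mult.commute)
qed

lemma two_others: "n \<ge> 3 \<Longrightarrow> (a::nat) < n \<Longrightarrow> \<exists>p q. p<n \<and> q<n \<and> p\<noteq>a \<and> q\<noteq>a \<and> p\<noteq>q"
  by (rule exI[of _ "if a=0 then 1 else 0"], rule exI[of _ "if a=2 then 1 else 2"]) auto

lemma three_others: "n \<ge> 4 \<Longrightarrow> (a::nat) < n \<Longrightarrow>
   \<exists>p q r. p<n \<and> q<n \<and> r<n \<and> p\<noteq>a \<and> q\<noteq>a \<and> r\<noteq>a \<and> p\<noteq>q \<and> p\<noteq>r \<and> q\<noteq>r"
  by (rule exI[of _ "if a=0 then 3 else 0"], rule exI[of _ "if a=1 then 3 else 1"],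
      rule exI[of _ "if a=2 then 3 else 2"]) auto

lemma n3_dims: "(a::nat) < 3 \<Longrightarrow> \<exists>p q. {..<3} = {a,p,q} \<and> a\<noteq>p \<and> a\<noteq>q \<and> p\<noteq>q"
proof -
  assume "a < 3"
  then have "a = 0 \<or> a = 1 \<or> a = 2" by arith
  then show ?thesis
  proof (elim disjE)
    assume "a = 0" then show ?thesis by (intro exI[of _ 1] exI[of _ 2]) (auto simp: lessThan_def)
  next
    assume "a = 1" then show ?thesis by (intro exI[of _ 0] exI[of _ 2]) (auto simp: lessThan_def)
  next
    assume "a = 2" then show ?thesis by (intro exI[of _ 0] exI[of _ 1]) (auto simp: lessThan_def)
  qed
qed

lemma core:
  fixes n :: nat and V :: "'a set" and f :: "'a \<Rightarrow> nat" and fk :: "nat \<Rightarrow> 'a \<Rightarrow> nat"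
    and c :: "nat \<Rightarrow> nat" and dg :: "nat \<Rightarrow> 'a \<Rightarrow> nat"
  assumes n3: "n \<ge> 3" and finV: "finite V"
  and sumc: "(\<Sum>k<n. c k) = 4*n-5"
  and sumf: "\<And>x. x\<in>V \<Longrightarrow> (\<Sum>k<n. fk k x) = f x"
  and fk2: "\<And>x k. x\<in>V \<Longrightarrow> k<n \<Longrightarrow> fk k x \<le> 2"
  and fkc: "\<And>x k. x\<in>V \<Longrightarrow> k<n \<Longrightarrow> fk k x \<le> c k"
  and fmax: "\<And>x. x\<in>V \<Longrightarrow> f x \<le> 2*n-2"
  and dgeq: "\<And>x k. x\<in>V \<Longrightarrow> k<n \<Longrightarrow> dg k x + f x + 2 = 2*n + fk k x"
  and U1: "\<And>x y t. x\<in>V \<Longrightarrow> y\<in>V \<Longrightarrow> x\<noteq>y \<Longrightarrow> t<n \<Longrightarrow> fk t x + fk t y \<le> c t + 1"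
  and U2: "\<And>u v w b. u\<in>V \<Longrightarrow> v\<in>V \<Longrightarrow> w\<in>V \<Longrightarrow> u\<noteq>v \<Longrightarrow> u\<noteq>w \<Longrightarrow> v\<noteq>w \<Longrightarrow> b<n \<Longrightarrow>
            fk b u \<ge> 1 \<Longrightarrow> fk b v \<ge> 1 \<Longrightarrow> fk b w \<ge> 1 \<Longrightarrow> c b \<ge> 2"
  and T3: "\<And>x y z. x\<in>V \<Longrightarrow> y\<in>V \<Longrightarrow> z\<in>V \<Longrightarrow> x\<noteq>y \<Longrightarrow> x\<noteq>z \<Longrightarrow> y\<noteq>z \<Longrightarrow>
            f x + f y + f z \<le> 4*n-3"
  and T4: "\<And>x y z w. x\<in>V \<Longrightarrow> y\<in>V \<Longrightarrow> z\<in>V \<Longrightarrow> w\<in>V \<Longrightarrow> x\<noteq>y \<Longrightarrow> x\<noteq>z \<Longrightarrow> x\<noteq>w \<Longrightarrow>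
            y\<noteq>z \<Longrightarrow> y\<noteq>w \<Longrightarrow> z\<noteq>w \<Longrightarrow> f x + f y + f z + f w \<le> 4*n-1"
  shows "(\<exists>m<n. c m \<ge> 3 \<and> (\<forall>x\<in>V. dg m x \<ge> 2))
       \<or> (\<exists>m<n. \<exists>m'<n. m \<noteq> m' \<and> c m \<ge> 2 \<and> c m' \<ge> 2 \<and>
            (\<forall>k\<in>{m, m'}. (\<forall>x\<in>V. dg k x \<ge> 1) \<and> card {x\<in>V. dg k x = 1} \<le> 1))"
proof (rule ccontr)
  assume neg: "\<not> ?thesis"
  have neg1: "\<not> (\<exists>m<n. c m \<ge> 3 \<and> (\<forall>x\<in>V. dg m x \<ge> 2))" using neg by blast
  have neg2: "\<not> (\<exists>m<n. \<exists>m'<n. m \<noteq> m' \<and> c m \<ge> 2 \<and> c m' \<ge> 2 \<and>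
            (\<forall>k\<in>{m, m'}. (\<forall>x\<in>V. dg k x \<ge> 1) \<and> card {x\<in>V. dg k x = 1} \<le> 1))" using neg by blast
  have nG1: "\<exists>x\<in>V. dg m x \<le> 1" if "m < n" "c m \<ge> 3" for m
  proof -
    have "\<not> (\<forall>x\<in>V. dg m x \<ge> 2)" using neg1 that by blast
    then obtain x where "x\<in>V" "\<not> dg m x \<ge> 2" by blast
    then show ?thesis by (intro bexI[of _ x]) auto
  qed
  define bad2 where "bad2 k \<longleftrightarrow> (\<exists>x\<in>V. dg k x = 0) \<or> (\<exists>x\<in>V. \<exists>y\<in>V. x\<noteq>y \<and> dg k x = 1 \<and> dg k y = 1)" for k
  have good_iff: "\<not> bad2 k \<longleftrightarrow> ((\<forall>x\<in>V. dg k x \<ge> 1) \<and> card {x\<in>V. dg k x = 1} \<le> 1)" for k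
  proof -
    have "finite {x\<in>V. dg k x = 1}" using finV by simp
    then have "card {x\<in>V. dg k x = 1} \<le> 1 \<longleftrightarrow> (\<forall>x\<in>V. \<forall>y\<in>V. dg k x = 1 \<longrightarrow> dg k y = 1 \<longrightarrow> x = y)"
      using card_le_Suc0_iff_eq[of "{x\<in>V. dg k x = 1}"] by auto
    then show ?thesis unfolding bad2_def by (auto simp: Suc_le_eq)
  qed
  have nG2: "bad2 m \<or> bad2 m'" if "m<n" "m'<n" "m\<noteq>m'" "c m \<ge> 2" "c m' \<ge> 2" for m m'
  proof (rule ccontr)
    assume "\<not> (bad2 m \<or> bad2 m')"
    then have "\<forall>k\<in>{m, m'}. (\<forall>x\<in>V. dg k x \<ge> 1) \<and> card {x\<in>V. dg k x = 1} \<le> 1"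
      using good_iff[of m] good_iff[of m'] by blast
    then show False using neg2 that by blast
  qed
  have f_ge: "f x \<ge> 2*n-3" if "x\<in>V" "k<n" "dg k x \<le> 1" for x k
    using dgeq[OF that(1,2)] that(3) n3 by linarith
  have sev: "f x = 2*n-2 \<and> fk k x = 0" if "x\<in>V" "k<n" "dg k x = 0" for x k
    using dgeq[OF that(1,2)] that(3) fmax[OF that(1)] n3 by linarith
  have mild: "f x = 2*n-3 + fk k x" if "x\<in>V" "k<n" "dg k x = 1" for x k
    using dgeq[OF that(1,2)] that(3) n3 by linarith
  have dg2: "dg j x = 2*n - f x" if "x\<in>V" "j<n" "fk j x = 2" for x j
    using dgeq[OF that(1,2)] that(3) n3 by linarith
  have dg2': "dg j x \<ge> 2" if "x\<in>V" "j<n" "fk j x = 2" for x j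
    using dg2[OF that] fmax[OF that(1)] n3 by linarith
  have sum2: "f x \<le> fk p x + fk q x + 2*(n-2)" if "x\<in>V" "p<n" "q<n" "p\<noteq>q" for x p q
  proof -
    have "sum (\<lambda>k. fk k x) {..<n} \<le> sum (\<lambda>k. fk k x) {p,q} + 2 * (card {..<n} - card {p,q})"
      by (rule sum_bound_out) (use that fk2 in auto)
    then show ?thesis using sumf[OF that(1)] that by simp
  qed
  have sum3: "f x \<le> fk p x + fk q x + fk r x + 2*(n-3)" if "x\<in>V" "p<n" "q<n" "r<n" "p\<noteq>q" "p\<noteq>r" "q\<noteq>r" for x p q r
  proof -
    have "sum (\<lambda>k. fk k x) {..<n} \<le> sum (\<lambda>k. fk k x) {p,q,r} + 2 * (card {..<n} - card {p,q,r})"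
      by (rule sum_bound_out) (use that fk2 in auto)
    then show ?thesis using sumf[OF that(1)] that by simp
  qed
  have sev_other: "fk j x = 2" if "x\<in>V" "k<n" "dg k x = 0" "j<n" "j\<noteq>k" for x k j
    using sum2[OF that(1,4,2,5)] sev[OF that(1-3)] fk2[OF that(1,4)] n3 by linarith
  have ex_bad: "\<exists>k0<n. bad2 k0"
  proof (rule ccontr)
    assume "\<not> (\<exists>k0<n. bad2 k0)"
    then have nb: "\<not> bad2 k" if "k<n" for k using that by blast
    have one: False if "m<n" "m'<n" "m\<noteq>m'" "c m \<ge> 2" "c m' \<ge> 2" for m m'
      using nG2[OF that] nb that by blast
    show False
    proof (cases "\<exists>m<n. c m \<ge> 2")
      case True
      then obtain m where m: "m<n" "c m \<ge> 2" by blast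
      have oth: "c k \<le> 1" if "k \<in> {..<n} - {m}" for k
      proof (rule ccontr)
        assume "\<not> c k \<le> 1"
        then have "c k \<ge> 2" by simp
        moreover have "k < n" "m \<noteq> k" using that by auto
        ultimately show False using one[OF m(1) \<open>k<n\<close> \<open>m\<noteq>k\<close> m(2)] by blast
      qed
      have "sum c {..<n} \<le> sum c {m} + 1 * (card {..<n} - card {m})"
        by (rule sum_bound_out) (use m oth in auto)
      then have cm: "c m \<ge> 3" using sumc n3 by simp
      obtain x where x: "x\<in>V" "dg m x \<le> 1" using nG1[OF m(1) cm] by blast
      have oth': "fk k x \<le> 1" if "k \<in> {..<n} - {m}" for k
        using fkc[OF x(1), of k] oth[OF that] that by auto
      have "sum (\<lambda>k. fk k x) {..<n} \<le> sum (\<lambda>k. fk k x) {m} + 1 * (card {..<n} - card {m})"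
        by (rule sum_bound_out) (use m oth' in auto)
      then have "f x \<le> fk m x + (n - 1)" using sumf[OF x(1)] by simp
      moreover have "dg m x + f x + 2 = 2*n + fk m x" using dgeq[OF x(1) m(1)] .
      ultimately show False using x(2) n3 by linarith
    next
      case False
      then have "\<And>k. k \<in> {..<n} \<Longrightarrow> c k \<le> 1" by (auto simp: not_le)
      then have "sum c {..<n} \<le> card {..<n} * 1" using sum_bounded_above[of "{..<n}" c 1] by simp
      then show False using sumc n3 by simp
    qed
  qed
  then obtain k0 where k0: "k0 < n" "bad2 k0" by blast
  show False
  proof (cases "\<exists>x\<in>V. \<exists>k<n. dg k x = 0")
    case True
    then obtain x a where x: "x\<in>V" "a<n" "dg a x = 0" by blast
    have fx: "f x = 2*n-2" using sev[OF x] by simp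
    have claim: False if p: "p<n" "q<n" "p\<noteq>a" "q\<noteq>a" "p\<noteq>q" "bad2 p" for p q
    proof -
      have fpx: "fk p x = 2" and fqx: "fk q x = 2" using sev_other[OF x] p by auto
      have dpx: "dg p x = 2" and dqx: "dg q x = 2" using dg2[OF x(1) _ fpx] dg2[OF x(1) _ fqx] fx p by auto
      from p(6) show False unfolding bad2_def
      proof (elim disjE bexE conjE)
        fix y assume y: "y\<in>V" "dg p y = 0"
        have yx: "y \<noteq> x" using y dpx by auto
        have fy: "f y = 2*n-2" using sev[OF y(1) p(1) y(2)] by simp
        have fqy: "fk q y = 2" using sev_other[OF y(1) p(1) y(2) p(2)] p by auto
        have "c q \<ge> 3" using U1[OF x(1) y(1) yx[symmetric] p(2)] fqx fqy by simp
        then obtain w where w: "w\<in>V" "dg q w \<le> 1" using nG1 p(2) by blast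
        have "w \<noteq> x" using w dqx by auto
        moreover have "w \<noteq> y" using w dg2[OF y(1) p(2) fqy] fy n3 by auto
        moreover have "f w \<ge> 2*n-3" using f_ge[OF w(1) p(2) w(2)] .
        ultimately have "f x + f y + f w \<le> 4*n-3" using T3[OF x(1) y(1) w(1)] yx by auto
        then show False using \<open>f w \<ge> 2*n-3\<close> fx fy n3 by linarith
      next
        fix y z assume yz: "y\<in>V" "z\<in>V" "y\<noteq>z" "dg p y = 1" "dg p z = 1"
        have "y \<noteq> x" "z \<noteq> x" using yz dpx by auto
        moreover have "f y \<ge> 2*n-3" "f z \<ge> 2*n-3" using f_ge[OF yz(1) p(1)] f_ge[OF yz(2) p(1)] yz by auto
        ultimately have "f x + f y + f z \<le> 4*n-3" using T3[OF x(1) yz(1,2)] yz(3) by auto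
        then show False using \<open>f y \<ge> 2*n-3\<close> \<open>f z \<ge> 2*n-3\<close> fx n3 by linarith
      qed
    qed
    obtain p q where pq: "p<n" "q<n" "p\<noteq>a" "q\<noteq>a" "p\<noteq>q" using two_others[OF n3 x(2)] by blast
    have "c p \<ge> 2" "c q \<ge> 2" using fkc[OF x(1) pq(1)] sev_other[OF x pq(1,3)] fkc[OF x(1) pq(2)] sev_other[OF x pq(2,4)] by simp_all
    then have "bad2 p \<or> bad2 q" using nG2 pq by blast
    then show False using claim pq by blast
  next
    case False
    then have nz: "dg k x \<noteq> 0" if "x\<in>V" "k<n" for x k using that by auto
    obtain u v where uv: "u\<in>V" "v\<in>V" "u\<noteq>v" "dg k0 u = 1" "dg k0 v = 1"
      using k0 nz unfolding bad2_def by blast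
    define a where "a = k0"
    have a: "a<n" "dg a u = 1" "dg a v = 1" using uv k0 a_def by auto
    have fu: "f u \<ge> 2*n-3" "f v \<ge> 2*n-3" using f_ge[OF uv(1) a(1)] f_ge[OF uv(2) a(1)] a by auto
    have bad2_w: "\<exists>p\<in>V. \<exists>q\<in>V. p\<noteq>q \<and> dg t p = 1 \<and> dg t q = 1" if "bad2 t" "t<n" for t
      using that nz unfolding bad2_def by blast
    have bad2_1: "\<exists>p\<in>V. dg t p = 1" if "bad2 t" "t<n" for t
      using bad2_w[OF that] by blast
    show False
    proof (cases "n \<ge> 4")
      case True
      have M: False if "x\<in>V" "dg a x = 1" "p<n" "q<n" "p\<noteq>a" "q\<noteq>a" "p\<noteq>q" "fk p x \<le> 1" "fk q x \<le> 1" for x p q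
      proof -
        have "f x \<le> fk a x + fk p x + fk q x + 2*(n-3)" by (rule sum3) (use that a(1) in auto)
        then show False using that mild[OF that(1) a(1) that(2)] n3 by linarith
      qed
      obtain j1 j2 j3 where j: "j1<n" "j2<n" "j3<n" "j1\<noteq>a" "j2\<noteq>a" "j3\<noteq>a" "j1\<noteq>j2" "j1\<noteq>j3" "j2\<noteq>j3"
        using three_others[OF True a(1)] by blast
      have twos: "\<exists>t1 t2. t1<n \<and> t2<n \<and> t1\<noteq>t2 \<and> fk t1 u = 2 \<and> fk t2 u = 2"
      proof -
        have e1: "fk j1 u = 2 \<or> fk j1 u \<le> 1" using fk2[OF uv(1) j(1)] by linarith
        have e2: "fk j2 u = 2 \<or> fk j2 u \<le> 1" using fk2[OF uv(1) j(2)] by linarith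
        have e3: "fk j3 u = 2 \<or> fk j3 u \<le> 1" using fk2[OF uv(1) j(3)] by linarith
        have m12: "\<not> (fk j1 u \<le> 1 \<and> fk j2 u \<le> 1)" using M[OF uv(1) a(2) j(1,2,4,5,7)] by blast
        have m13: "\<not> (fk j1 u \<le> 1 \<and> fk j3 u \<le> 1)" using M[OF uv(1) a(2) j(1,3,4,6,8)] by blast
        have m23: "\<not> (fk j2 u \<le> 1 \<and> fk j3 u \<le> 1)" using M[OF uv(1) a(2) j(2,3,5,6,9)] by blast
        show ?thesis
        proof (cases "fk j1 u = 2")
          case T1: True
          show ?thesis
          proof (cases "fk j2 u = 2")
            case True then show ?thesis using T1 j by blast
          next
            case False
            then have "fk j3 u = 2" using e2 e3 m23 by blast
            then show ?thesis using T1 j by blast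
          qed
        next
          case False
          then have "fk j2 u = 2" "fk j3 u = 2" using e1 e2 e3 m12 m13 by blast+
          then show ?thesis using j by blast
        qed
      qed
      then obtain t1 t2 where t: "t1<n" "t2<n" "t1\<noteq>t2" "fk t1 u = 2" "fk t2 u = 2" by blast
      have claim: False if ht: "t<n" "fk t u = 2" "bad2 t" for t
      proof -
        obtain p q where pq: "p\<in>V" "q\<in>V" "p\<noteq>q" "dg t p = 1" "dg t q = 1" using bad2_w[OF ht(3,1)] by blast
        have dtu: "dg t u \<ge> 2" using dg2'[OF uv(1) ht(1,2)] .
        define w where "w = (if p = v then q else p)"
        have w: "w\<in>V" "w\<noteq>u" "w\<noteq>v" "dg t w = 1" using pq dtu w_def by auto
        have "f w \<ge> 2*n-3" using f_ge[OF w(1) ht(1)] w(4) by simp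
        then show False using T3[OF uv(1,2) w(1) uv(3) w(2)[symmetric] w(3)[symmetric]] fu True by linarith
      qed
      have "c t1 \<ge> 2" "c t2 \<ge> 2" using fkc[OF uv(1) t(1)] fkc[OF uv(1) t(2)] t by simp_all
      then show False using nG2[OF t(1,2,3)] claim t by blast
    next
      case False
      then have n3e: "n = 3" using n3 by simp
      have struct: "\<exists>t b. t<n \<and> b<n \<and> t\<noteq>a \<and> b\<noteq>a \<and> t\<noteq>b \<and> fk t x = 2 \<and> fk b x = 1 \<and> (\<forall>k<n. k = a \<or> k = t \<or> k = b)"
        if x: "x\<in>V" "dg a x = 1" for x
      proof -
        obtain p q where pq: "{..<3} = {a,p,q}" "a\<noteq>p" "a\<noteq>q" "p\<noteq>q" using n3_dims a(1) n3e by blast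
        have "f x = fk a x + fk p x + fk q x" using sumf[OF x(1)] pq n3e by simp
        moreover have "f x = 3 + fk a x" using mild[OF x(1) a(1) x(2)] n3e by simp
        moreover have "p < n" "q < n" using pq n3e by auto
        moreover have "fk p x \<le> 2" "fk q x \<le> 2" using fk2[OF x(1)] \<open>p<n\<close> \<open>q<n\<close> by auto
        moreover have allk: "\<forall>k<n. k = a \<or> k = p \<or> k = q" using pq n3e by auto
        ultimately have "(fk p x = 2 \<and> fk q x = 1) \<or> (fk p x = 1 \<and> fk q x = 2)" by linarith
        then show ?thesis
        proof
          assume "fk p x = 2 \<and> fk q x = 1"
          then show ?thesis using pq \<open>p<n\<close> \<open>q<n\<close> allk by blast
        next
          assume "fk p x = 1 \<and> fk q x = 2"
          then show ?thesis using pq \<open>p<n\<close> \<open>q<n\<close> allk by blast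
        qed
      qed
      obtain tu bu where su: "tu<n" "bu<n" "tu\<noteq>a" "bu\<noteq>a" "tu\<noteq>bu" "fk tu u = 2" "fk bu u = 1" "\<forall>k<n. k = a \<or> k = tu \<or> k = bu"
        using struct[OF uv(1) a(2)] by blast
      obtain tv bv where sv: "tv<n" "bv<n" "tv\<noteq>a" "bv\<noteq>a" "tv\<noteq>bv" "fk tv v = 2" "fk bv v = 1" "\<forall>k<n. k = a \<or> k = tv \<or> k = bv"
        using struct[OF uv(2) a(3)] by blast
      have fvV: "f x \<ge> 3" if "x\<in>V" "t<n" "dg t x = 1" for x t using f_ge[OF that(1,2)] that(3) n3e by simp
      show False
      proof (cases "tu = tv")
        case False
        have tvbu: "tv = bu" using su(8) sv(1,3) False by blast
        have tubv: "tu = bv" using sv(8) su(1,3) False by blast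
        have claim: False if xy: "x\<in>V" "y\<in>V" "x\<noteq>y" "dg a x = 1" "dg a y = 1" "t<n" "t\<noteq>a" "fk t x = 2" "fk t y = 1" "bad2 t" for x y t
        proof -
          obtain p q where pq: "p\<in>V" "q\<in>V" "p\<noteq>q" "dg t p = 1" "dg t q = 1" using bad2_w[OF xy(10,6)] by blast
          have "dg t x \<ge> 2" using dg2'[OF xy(1,6,8)] .
          then have px: "p \<noteq> x" "q \<noteq> x" using pq by auto
          have fx: "f x \<ge> 3" "f y \<ge> 3" using fvV xy a(1) by auto
          show False
          proof (cases "p = y \<or> q = y")
            case True
            have fy: "f y = 4" using mild[OF xy(2,6)] xy(9) True pq n3e by auto
            define w where "w = (if p = y then q else p)"
            have w: "w\<in>V" "w\<noteq>x" "w\<noteq>y" "dg t w = 1" using pq px w_def True by auto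
            then show False using T3[OF xy(1,2) w(1) xy(3) w(2)[symmetric] w(3)[symmetric]] fvV[OF w(1) xy(6) w(4)] fx fy n3e by linarith
          next
            case False
            have S: "f x + f y + f p + f q \<le> 4*n-1"
              by (rule T4) (use xy pq px False in auto)
            then show False using fvV[OF pq(1) xy(6) pq(4)] fvV[OF pq(2) xy(6) pq(5)] fx n3e by linarith
          qed
        qed
        have "c tu \<ge> 2" "c tv \<ge> 2" using fkc[OF uv(1) su(1)] fkc[OF uv(2) sv(1)] su(6) sv(6) by simp_all
        then have "bad2 tu \<or> bad2 tv" using nG2 su(1) sv(1) False by blast
        then show False
        proof
          assume "bad2 tu"
          then show False using claim[OF uv(1,2,3) a(2,3) su(1,3,6)] su(7) tvbu sv tubv by simp
        next
          assume "bad2 tv"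
          then show False using claim[OF uv(2,1) uv(3)[symmetric] a(3,2) sv(1,3,6)] su(7) tvbu by simp
        qed
      next
        case True
        define t where "t = tu"
        have bb: "bv = bu" using su(8) sv(2,4,5) True by blast
        have ct: "c t \<ge> 3" using U1[OF uv(1,2,3) su(1)] su(6) sv(6) True t_def by simp
        obtain w where w: "w\<in>V" "dg t w \<le> 1" using nG1 ct su(1) t_def by blast
        have tn: "t < n" using su(1) t_def by simp
        have w1: "dg t w = 1" using w(2) nz[OF w(1) tn] by linarith
        have wu: "w \<noteq> u" "w \<noteq> v" using w dg2'[OF uv(1) su(1,6)] dg2'[OF uv(2) sv(1,6)] True t_def by auto
        have f3: "f u = 3" "f v = 3" "f w = 3"
          using T3[OF uv(1,2) w(1) uv(3) wu(1)[symmetric] wu(2)[symmetric]] fvV[OF w(1) su(1)] w1 t_def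
            fvV[OF uv(1) a(1,2)] fvV[OF uv(2) a(1,3)] n3e by auto
        have fkw: "fk t w = 0" using mild[OF w(1) su(1)] w1 t_def f3 n3e by simp
        obtain b where b: "b = bu" by blast
        have fbw: "fk b w \<ge> 1"
        proof -
          have "f w = fk a w + fk t w + fk b w"
          proof -
            have "{..<n} = {a, t, b}" using su(8) su(1,2) a(1) t_def b by auto
            then show ?thesis using sumf[OF w(1)] su(3,4,5) t_def b by simp
          qed
          then show ?thesis using f3 fkw fk2[OF w(1) a(1)] by linarith
        qed
        have cb: "c b \<ge> 2" using U2[OF uv(1,2) w(1) uv(3) wu(1)[symmetric] wu(2)[symmetric] su(2)] su(7) sv(7) bb b fbw by simp
        have ct2: "c t \<ge> 2" using ct by simp
        have tb: "t \<noteq> b" using su(5) t_def b by simp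
        have nobad: False if hk: "k<n" "bad2 k" "dg k u \<ge> 2" "dg k v \<ge> 2" "dg k w \<ge> 2" for k
        proof -
          obtain z where z: "z\<in>V" "dg k z = 1" using bad2_1[OF hk(2,1)] by blast
          have "z \<noteq> u" "z \<noteq> v" "z \<noteq> w" using z hk by auto
          then have S: "f u + f v + f w + f z \<le> 4*n-1"
            by (intro T4) (use uv w z wu in auto)
          then show False using f3 fvV[OF z(1) hk(1) z(2)] n3e by linarith
        qed
        have bn: "b < n" using su(2) b by simp
        have "bad2 t \<or> bad2 b" using nG2[OF tn bn tb ct2 cb] .
        then show False
        proof
          assume "bad2 t"
          obtain p q where pq: "p\<in>V" "q\<in>V" "p\<noteq>q" "dg t p = 1" "dg t q = 1" using bad2_w[OF \<open>bad2 t\<close>] su(1) t_def by blast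
          have "dg t u \<ge> 2" "dg t v \<ge> 2" using dg2'[OF uv(1) su(1,6)] dg2'[OF uv(2) sv(1,6)] True t_def by auto
          then have puv: "p \<noteq> u" "p \<noteq> v" "q \<noteq> u" "q \<noteq> v" using pq by auto
          define z where "z = (if p = w then q else p)"
          have z: "z\<in>V" "z\<noteq>u" "z\<noteq>v" "z\<noteq>w" "dg t z = 1" using pq puv z_def by auto
          have S: "f u + f v + f w + f z \<le> 4*n-1"
            by (intro T4) (use uv w z wu in auto)
          then show False using f3 fvV[OF z(1) tn] z(5) n3e by linarith
        next
          assume "bad2 b"
          moreover have "dg b u \<ge> 2" "dg b v \<ge> 2" "dg b w \<ge> 2"
            using dgeq[OF uv(1) su(2)] dgeq[OF uv(2) su(2)] dgeq[OF w(1) su(2)] f3 su(7) sv(7) bb b fbw n3e by auto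
          ultimately show False using nobad su(2) b by blast
        qed
      qed
    qed
  qed
qed

lemma card_split: assumes n: "n \<ge> 1" and S: "S \<subseteq> bh_edges n"
  shows "card S = (\<Sum>k<n. card (S \<inter> dim_edges n k))"
proof -
  have eq: "S = (\<Union>k\<in>{..<n}. S \<inter> dim_edges n k)"
    using dim_exists[OF n] S by blast
  have fin: "finite S" using finite_edges[OF n] S finite_subset by blast
  have "card (\<Union>k\<in>{..<n}. S \<inter> dim_edges n k) = (\<Sum>k<n. card (S \<inter> dim_edges n k))"
  proof (rule card_UN_disjoint)
    show "finite {..<n}" by simp
    show "\<forall>i\<in>{..<n}. finite (S \<inter> dim_edges n i)" using fin by simp
    show "\<forall>i\<in>{..<n}. \<forall>j\<in>{..<n}. i \<noteq> j \<longrightarrow> S \<inter> dim_edges n i \<inter> (S \<inter> dim_edges n j) = {}"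
      using dim_unique[OF n] by blast
  qed
  then show ?thesis using eq by simp
qed

lemma card_Ex: assumes n: "n \<ge> 1" and x: "x \<in> bh_verts n"
  shows "card {e\<in>bh_edges n. x\<in>e} = 2*n"
proof -
  have sub: "{e\<in>bh_edges n. x\<in>e} \<subseteq> bh_edges n" by blast
  have "card {e\<in>bh_edges n. x\<in>e} = (\<Sum>k<n. card ({e\<in>bh_edges n. x\<in>e} \<inter> dim_edges n k))"
    by (rule card_split[OF n sub])
  also have "\<dots> = (\<Sum>k<n. 2)" by (rule sum.cong) (use card_ExD[OF n x] in auto)
  finally show ?thesis by simp
qed

lemma edge_pair: assumes n: "n \<ge> 1" "e \<in> bh_edges n" "x \<in> e" "y \<in> e" "x \<noteq> y"
  shows "e = {x, y}"
proof -
  obtain a b where "e = {a,b}" using edge_two[OF n(1,2)] by blast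
  then show ?thesis using assms(3-5) by auto
qed

lemma sum_card_swap:
  assumes "finite W" "finite F"
  shows "(\<Sum>w\<in>W. card {e\<in>F. w\<in>e}) = (\<Sum>e\<in>F. card (W \<inter> e))"
proof -
  have "(\<Sum>w\<in>W. card {e\<in>F. w\<in>e}) = (\<Sum>w\<in>W. \<Sum>e\<in>F. if w \<in> e then 1 else 0)"
  proof (rule sum.cong)
    fix w assume "w \<in> W"
    have "card {e\<in>F. w\<in>e} = (\<Sum>e\<in>{e\<in>F. w\<in>e}. 1)" by simp
    also have "\<dots> = (\<Sum>e\<in>F. if w \<in> e then 1 else 0)" by (rule sum.inter_filter[OF assms(2)])
    finally show "card {e\<in>F. w\<in>e} = (\<Sum>e\<in>F. if w \<in> e then 1 else 0)" .
  qed simp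
  also have "\<dots> = (\<Sum>e\<in>F. \<Sum>w\<in>W. if w \<in> e then 1 else 0)" by (rule sum.swap)
  also have "\<dots> = (\<Sum>e\<in>F. card (W \<inter> e))"
  proof (rule sum.cong)
    fix e assume "e \<in> F"
    have "(\<Sum>w\<in>W. if w \<in> e then 1 else 0) = (\<Sum>w\<in>{w\<in>W. w\<in>e}. (1::nat))"
      by (rule sum.inter_filter[OF assms(1), symmetric])
    also have "{w\<in>W. w\<in>e} = W \<inter> e" by blast
    also have "(\<Sum>w\<in>W \<inter> e. (1::nat)) = card (W \<inter> e)" by simp
    finally show "(\<Sum>w\<in>W. if w \<in> e then 1 else 0) = card (W \<inter> e)" .
  qed simp
  finally show ?thesis .
qed

lemma W_bound:
  assumes n: "n \<ge> 1" and F: "F \<subseteq> bh_edges n" and W: "finite W"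
  shows "(\<Sum>w\<in>W. card {e\<in>F. w\<in>e}) \<le> card F + card {w\<in>W. even (w!0)} * card {w\<in>W. odd (w!0)}"
proof -
  have finF: "finite F" using finite_edges[OF n] F finite_subset by blast
  have "(\<Sum>w\<in>W. card {e\<in>F. w\<in>e}) = (\<Sum>e\<in>F. card (W \<inter> e))" by (rule sum_card_swap[OF W finF])
  also have "\<dots> \<le> (\<Sum>e\<in>F. 1 + (if e \<subseteq> W then 1 else 0))"
  proof (rule sum_mono)
    fix e assume "e \<in> F"
    then obtain a b where "e = {a,b}" using edge_two[OF n] F by blast
    then show "card (W \<inter> e) \<le> 1 + (if e \<subseteq> W then 1 else 0)"
      by (cases "a \<in> W"; cases "b \<in> W") (auto simp: Int_insert_right card_insert_if)
  qed
  also have "\<dots> = card F + card {e\<in>F. e \<subseteq> W}"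
  proof -
    have "(\<Sum>e\<in>F. 1 + (if e \<subseteq> W then 1 else 0)) = (\<Sum>e\<in>F. (1::nat)) + (\<Sum>e\<in>F. if e \<subseteq> W then 1 else 0)"
      by (rule sum.distrib)
    also have "(\<Sum>e\<in>F. if e \<subseteq> W then 1 else 0) = (\<Sum>e\<in>{e\<in>F. e \<subseteq> W}. (1::nat))"
      by (rule sum.inter_filter[OF finF, symmetric])
    finally show ?thesis by simp
  qed
  also have "card {e\<in>F. e \<subseteq> W} \<le> card {w\<in>W. even (w!0)} * card {w\<in>W. odd (w!0)}"
  proof -
    have "{e\<in>F. e \<subseteq> W} \<subseteq> (\<lambda>(a,b). {a,b}) ` ({w\<in>W. even (w!0)} \<times> {w\<in>W. odd (w!0)})"
    proof
      fix e assume e: "e \<in> {e\<in>F. e \<subseteq> W}"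
      then obtain a b where ab: "e = {a,b}" "even (a!0) \<longleftrightarrow> odd (b!0)" using edge_two[OF n] F by blast
      show "e \<in> (\<lambda>(a,b). {a,b}) ` ({w\<in>W. even (w!0)} \<times> {w\<in>W. odd (w!0)})"
      proof (cases "even (a!0)")
        case True
        then have "(a,b) \<in> {w\<in>W. even (w!0)} \<times> {w\<in>W. odd (w!0)}" using ab e by auto
        then show ?thesis using ab(1) by force
      next
        case False
        then have "(b,a) \<in> {w\<in>W. even (w!0)} \<times> {w\<in>W. odd (w!0)}" using ab e by auto
        moreover have "e = (\<lambda>(a,b). {a,b}) (b,a)" using ab(1) by auto
        ultimately show ?thesis by blast
      qed
    qed
    then have "card {e\<in>F. e \<subseteq> W} \<le> card ((\<lambda>(a,b). {a,b}) ` ({w\<in>W. even (w!0)} \<times> {w\<in>W. odd (w!0)}))"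
      by (rule card_mono[rotated]) (use W in simp)
    also have "\<dots> \<le> card ({w\<in>W. even (w!0)} \<times> {w\<in>W. odd (w!0)})" by (rule card_image_le) (use W in simp)
    also have "\<dots> = card {w\<in>W. even (w!0)} * card {w\<in>W. odd (w!0)}" by (rule card_cartesian_product)
    finally show ?thesis .
  qed
  finally show ?thesis by simp
qed

lemma eo_card: assumes "finite W" shows "card {w\<in>W. even (w!0)} + card {w\<in>W. odd (w!(0::nat))} = card (W :: nat list set)"
proof -
  have "W = {w\<in>W. even (w!0)} \<union> {w\<in>W. odd (w!0)}" by auto
  moreover have "{w\<in>W. even (w!0)} \<inter> {w\<in>W. odd (w!0)} = {}" by auto
  ultimately show ?thesis using card_Un_disjoint[of "{w\<in>W. even (w!0)}" "{w\<in>W. odd (w!0)}"] assms by simp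
qed

lemma prod3: "(a::nat) + b = 3 \<Longrightarrow> a * b \<le> 2"
proof -
  assume h: "a + b = 3"
  then have "a = 0 \<or> a = 1 \<or> a = 2 \<or> a = 3" by arith
  then show ?thesis using h by auto
qed

lemma prod4: "(a::nat) + b = 4 \<Longrightarrow> a * b \<le> 4"
proof -
  assume h: "a + b = 4"
  then have "a = 0 \<or> a = 1 \<or> a = 2 \<or> a = 3 \<or> a = 4" by arith
  then show ?thesis using h by auto
qed

theorem lemma6:
  fixes n :: nat and F :: "nat list set set"
  assumes "n \<ge> 3"
    and "F \<subseteq> bh_edges n"
    and "card F = 4 * n - 5"
    and "\<forall>x\<in>bh_verts n. deg_in (bh_edges n - F) x \<ge> 2"
  shows "(\<exists>m<n. card (F \<inter> dim_edges n m) \<ge> 3 \<and>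
            (\<forall>x\<in>bh_verts n. deg_in (bh_edges n - F - dim_edges n m) x \<ge> 2))
       \<or> (\<exists>m<n. \<exists>m'<n. m \<noteq> m' \<and>
            card (F \<inter> dim_edges n m) \<ge> 2 \<and> card (F \<inter> dim_edges n m') \<ge> 2 \<and>
            (\<forall>k\<in>{m, m'}.
               (\<forall>x\<in>bh_verts n. deg_in (bh_edges n - F - dim_edges n k) x \<ge> 1) \<and>
               card {x\<in>bh_verts n. deg_in (bh_edges n - F - dim_edges n k) x = 1} \<le> 1))"
proof -
  note n3 = assms(1) and FE = assms(2) and cF = assms(3) and hdeg = assms(4)
  have n1: "n \<ge> 1" using n3 by simp
  have finE: "finite (bh_edges n)" using finite_edges[OF n1] .
  have finF: "finite F" using finE FE finite_subset by blast
  have sumc: "(\<Sum>k<n. card (F \<inter> dim_edges n k)) = 4*n-5"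
    using card_split[OF n1 FE] cF by simp
  have sumf: "(\<Sum>k<n. card {e\<in>F \<inter> dim_edges n k. x\<in>e}) = card {e\<in>F. x\<in>e}" if "x \<in> bh_verts n" for x
  proof -
    have "card {e\<in>F. x\<in>e} = (\<Sum>k<n. card ({e\<in>F. x\<in>e} \<inter> dim_edges n k))"
      by (rule card_split[OF n1]) (use FE in auto)
    moreover have "{e\<in>F. x\<in>e} \<inter> dim_edges n k = {e\<in>F \<inter> dim_edges n k. x\<in>e}" for k by auto
    ultimately show ?thesis by simp
  qed
  have fk2: "card {e\<in>F \<inter> dim_edges n k. x\<in>e} \<le> 2" if "x \<in> bh_verts n" "k < n" for x k
  proof -
    have "{e\<in>F \<inter> dim_edges n k. x\<in>e} \<subseteq> {e\<in>bh_edges n. x\<in>e} \<inter> dim_edges n k" using FE by auto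
    then have "card {e\<in>F \<inter> dim_edges n k. x\<in>e} \<le> card ({e\<in>bh_edges n. x\<in>e} \<inter> dim_edges n k)"
      by (rule card_mono[rotated]) (use finE in simp)
    then show ?thesis using card_ExD[OF n1 that] by simp
  qed
  have fkc: "card {e\<in>F \<inter> dim_edges n k. x\<in>e} \<le> card (F \<inter> dim_edges n k)" for x k
    by (rule card_mono) (use finF in auto)
  have fmax: "card {e\<in>F. x\<in>e} \<le> 2*n-2" if x: "x \<in> bh_verts n" for x
  proof -
    have "{e\<in>bh_edges n - F. x\<in>e} = {e\<in>bh_edges n. x\<in>e} - {e\<in>F. x\<in>e}" by auto
    then have "deg_in (bh_edges n - F) x = card ({e\<in>bh_edges n. x\<in>e} - {e\<in>F. x\<in>e})" unfolding deg_in_def by simp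
    moreover have "card ({e\<in>bh_edges n. x\<in>e} - {e\<in>F. x\<in>e}) = card {e\<in>bh_edges n. x\<in>e} - card {e\<in>F. x\<in>e}"
      by (rule card_Diff_subset) (use finF FE in auto)
    moreover have "card {e\<in>F. x\<in>e} \<le> card {e\<in>bh_edges n. x\<in>e}"
      by (rule card_mono) (use finE FE in auto)
    moreover have "deg_in (bh_edges n - F) x \<ge> 2" using hdeg x by blast
    ultimately show ?thesis using card_Ex[OF n1 x] by linarith
  qed
  have dgeq: "deg_in (bh_edges n - F - dim_edges n k) x + card {e\<in>F. x\<in>e} + 2 = 2*n + card {e\<in>F \<inter> dim_edges n k. x\<in>e}"
    if x: "x \<in> bh_verts n" and k: "k < n" for x k
  proof -
    let ?Ex = "{e\<in>bh_edges n. x\<in>e}" and ?Fx = "{e\<in>F. x\<in>e}" and ?D = "{e\<in>bh_edges n. x\<in>e} \<inter> dim_edges n k"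
    have "{e\<in>bh_edges n - F - dim_edges n k. x\<in>e} = ?Ex - (?Fx \<union> ?D)" by auto
    then have "deg_in (bh_edges n - F - dim_edges n k) x = card (?Ex - (?Fx \<union> ?D))" unfolding deg_in_def by simp
    moreover have "card (?Ex - (?Fx \<union> ?D)) = card ?Ex - card (?Fx \<union> ?D)"
      by (rule card_Diff_subset) (use finF finE FE in auto)
    moreover have "card ?Fx + card ?D = card (?Fx \<union> ?D) + card (?Fx \<inter> ?D)"
      by (rule card_Un_Int) (use finF finE in auto)
    moreover have "?Fx \<inter> ?D = {e\<in>F \<inter> dim_edges n k. x\<in>e}" using FE by auto
    then have "card (?Fx \<inter> ?D) = card {e\<in>F \<inter> dim_edges n k. x\<in>e}" by simp
    moreover have "card (?Fx \<union> ?D) \<le> card ?Ex"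
      by (rule card_mono) (use finE FE in auto)
    ultimately show ?thesis using card_Ex[OF n1 x] card_ExD[OF n1 x k] by linarith
  qed
  have U1: "card {e\<in>F \<inter> dim_edges n t. x\<in>e} + card {e\<in>F \<inter> dim_edges n t. y\<in>e} \<le> card (F \<inter> dim_edges n t) + 1"
    if "x \<in> bh_verts n" "y \<in> bh_verts n" "x \<noteq> y" "t < n" for x y t
  proof -
    let ?A = "{e\<in>F \<inter> dim_edges n t. x\<in>e}" and ?B = "{e\<in>F \<inter> dim_edges n t. y\<in>e}"
    have "card ?A + card ?B = card (?A \<union> ?B) + card (?A \<inter> ?B)"
      by (rule card_Un_Int) (use finF in auto)
    moreover have "card (?A \<union> ?B) \<le> card (F \<inter> dim_edges n t)"
      by (rule card_mono) (use finF in auto)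
    moreover have "?A \<inter> ?B \<subseteq> {{x,y}}"
      using edge_pair[OF n1 _ _ _ that(3)] FE by auto
    then have "card (?A \<inter> ?B) \<le> 1" using card_mono[of "{{x,y}}" "?A \<inter> ?B"] by simp
    ultimately show ?thesis by linarith
  qed
  have U2: "card (F \<inter> dim_edges n b) \<ge> 2"
    if "u \<in> bh_verts n" "v \<in> bh_verts n" "w \<in> bh_verts n" "u \<noteq> v" "u \<noteq> w" "v \<noteq> w" "b < n"
       "card {e\<in>F \<inter> dim_edges n b. u\<in>e} \<ge> 1" "card {e\<in>F \<inter> dim_edges n b. v\<in>e} \<ge> 1"
       "card {e\<in>F \<inter> dim_edges n b. w\<in>e} \<ge> 1" for u v w b
  proof (rule ccontr)
    assume "\<not> card (F \<inter> dim_edges n b) \<ge> 2"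
    then have c1: "card (F \<inter> dim_edges n b) \<le> Suc 0" by simp
    have fin: "finite (F \<inter> dim_edges n b)" using finF by simp
    have all_eq: "e1 = e2" if "e1 \<in> F \<inter> dim_edges n b" "e2 \<in> F \<inter> dim_edges n b" for e1 e2
      using card_le_Suc0_iff_eq[OF fin] c1 that by blast
    obtain e1 where e1: "e1 \<in> F \<inter> dim_edges n b" "u \<in> e1"
      using \<open>card {e\<in>F \<inter> dim_edges n b. u\<in>e} \<ge> 1\<close> by (metis (no_types, lifting) One_nat_def card.empty empty_Collect_eq not_one_le_zero)
    obtain e2 where e2: "e2 \<in> F \<inter> dim_edges n b" "v \<in> e2"
      using \<open>card {e\<in>F \<inter> dim_edges n b. v\<in>e} \<ge> 1\<close> by (metis (no_types, lifting) One_nat_def card.empty empty_Collect_eq not_one_le_zero)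
    obtain e3 where e3: "e3 \<in> F \<inter> dim_edges n b" "w \<in> e3"
      using \<open>card {e\<in>F \<inter> dim_edges n b. w\<in>e} \<ge> 1\<close> by (metis (no_types, lifting) One_nat_def card.empty empty_Collect_eq not_one_le_zero)
    have "e2 = e1" "e3 = e1" using all_eq e1 e2 e3 by blast+
    then have uvw: "u \<in> e1" "v \<in> e1" "w \<in> e1" using e1 e2 e3 by auto
    have "e1 \<in> bh_edges n" using e1 FE by auto
    then obtain p q where "e1 = {p,q}" using edge_two[OF n1] by blast
    then show False using uvw that(4-6) by auto
  qed
  have T3: "card {e\<in>F. x\<in>e} + card {e\<in>F. y\<in>e} + card {e\<in>F. z\<in>e} \<le> 4*n-3"
    if "x \<in> bh_verts n" "y \<in> bh_verts n" "z \<in> bh_verts n" "x \<noteq> y" "x \<noteq> z" "y \<noteq> z" for x y z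
  proof -
    let ?W = "{x,y,z}"
    have "(\<Sum>w\<in>?W. card {e\<in>F. w\<in>e}) \<le> card F + card {w\<in>?W. even (w!0)} * card {w\<in>?W. odd (w!0)}"
      by (rule W_bound[OF n1 FE]) simp
    moreover have "card {w\<in>?W. even (w!0)} * card {w\<in>?W. odd (w!0)} \<le> 2"
      using prod3 eo_card[of ?W] that by simp
    moreover have "(\<Sum>w\<in>?W. card {e\<in>F. w\<in>e}) = card {e\<in>F. x\<in>e} + card {e\<in>F. y\<in>e} + card {e\<in>F. z\<in>e}"
      using that by simp
    ultimately show ?thesis using cF n3 by linarith
  qed
  have T4: "card {e\<in>F. x\<in>e} + card {e\<in>F. y\<in>e} + card {e\<in>F. z\<in>e} + card {e\<in>F. w\<in>e} \<le> 4*n-1"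
    if "x \<in> bh_verts n" "y \<in> bh_verts n" "z \<in> bh_verts n" "w \<in> bh_verts n" "x \<noteq> y" "x \<noteq> z" "x \<noteq> w"
       "y \<noteq> z" "y \<noteq> w" "z \<noteq> w" for x y z w
  proof -
    let ?W = "{x,y,z,w}"
    have "(\<Sum>v\<in>?W. card {e\<in>F. v\<in>e}) \<le> card F + card {v\<in>?W. even (v!0)} * card {v\<in>?W. odd (v!0)}"
      by (rule W_bound[OF n1 FE]) simp
    moreover have "card {v\<in>?W. even (v!0)} * card {v\<in>?W. odd (v!0)} \<le> 4"
      using prod4 eo_card[of ?W] that by simp
    moreover have "(\<Sum>v\<in>?W. card {e\<in>F. v\<in>e}) = card {e\<in>F. x\<in>e} + card {e\<in>F. y\<in>e} + card {e\<in>F. z\<in>e} + card {e\<in>F. w\<in>e}"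
      using that by simp
    ultimately show ?thesis using cF n3 by linarith
  qed
  show ?thesis
    by (rule core[where V = "bh_verts n" and f = "\<lambda>x. card {e\<in>F. x\<in>e}"
          and fk = "\<lambda>k x. card {e\<in>F \<inter> dim_edges n k. x\<in>e}" and c = "\<lambda>k. card (F \<inter> dim_edges n k)"
          and dg = "\<lambda>k x. deg_in (bh_edges n - F - dim_edges n k) x", OF n3 finite_verts sumc sumf fk2 fkc fmax dgeq U1 U2 T3 T4])
qed

end
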